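(* Let $\mathfrak{n}$ be a complex simple Lie algebra of type $D_n$ ($n\ge4$) and let $\mathfrak{n}=\mathfrak{n}_{-3}\oplus\cdots\oplus\mathfrak{n}_3$ be the $|3|$-grading associated to $\Sigma\in\{\Sigma_{i,1},\Sigma_{i,n},\Sigma_{1,n-1,n}\}$, where $\Sigma_{i,1}=\{\alpha_1,\alpha_i\}$, $\Sigma_{i,n}=\{\alpha_i,\alpha_n\}$ with $2\le i\le n-2$, and $\Sigma_{1,n-1,n}=\{\alpha_1,\alpha_{n-1},\alpha_n\}$. Then there is no graded isomorphism between $\mathfrak{F}_{r,3}$ and $\mathfrak{n}_{-3}\oplus\mathfrak{n}_{-2}\oplus\mathfrak{n}_{-1}$ (for any positive integer $r$).
   Context: Simple roots of $D_n$ are labeled in the standard way, with highest root $\alpha_1+2\alpha_2+\cdots+2\alpha_{n-2}+\alpha_{n-1}+\alpha_n$. For a root $\alpha=\sum a_l\alpha_l$ and a set $\Sigma$ of simple roots, $ht_\Sigma(\alpha)=\sum_{\alpha_l\in\Sigma}a_l$; the grading associated to $\Sigma$ is $\mathfrak{n}_m=\bigoplus_{ht_\Sigma(\alpha)=m}\mathfrak{g}_\alpha$ ($m\ne0$), $\mathfrak{n}_0=\mathfrak{h}\oplus\bigoplus_{ht_\Sigma(\alpha)=0}\mathfrak{g}_\alpha$, a $|3|$-grading when the highest root has $\Sigma$-height $3$. $\mathfrak{F}_{r,3}$ is the free nilpotent Lie algebra of step $3$ on $r$ generators with canonical grading $\mathfrak{f}_{-1}$ (span of generators), $\mathfrak{f}_{-2}=[\mathfrak{f}_{-1},\mathfrak{f}_{-1}]$,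 $\mathfrak{f}_{-3}=[\mathfrak{f}_{-1},\mathfrak{f}_{-2}]$; a graded isomorphism is a Lie algebra isomorphism mapping $\mathfrak{f}_{-m}$ onto $\mathfrak{n}_{-m}$ for $m=1,2,3$. *)

theory Defs
  imports Complex_Main "HOL-Library.Function_Algebras"
begin

definition csmul :: "complex \<Rightarrow> ('i \<Rightarrow> complex) \<Rightarrow> ('i \<Rightarrow> complex)" where
  "csmul c f = (\<lambda>i. c * f i)"

definition cspan :: "('i \<Rightarrow> complex) set \<Rightarrow> ('i \<Rightarrow> complex) set" where
  "cspan S = module.span csmul S"

definition comm :: "('a \<Rightarrow> 'a \<Rightarrow> 'a::ab_group_add) \<Rightarrow> 'a \<Rightarrow> 'a \<Rightarrow> 'a" where
  "comm mul x y = mul x y - mul y x"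

text \<open>(2n x 2n)-matrices are functions on index pairs, indices 0..2n-1, zero outside.\<close>
type_synonym cmat = "nat \<times> nat \<Rightarrow> complex"

definition mmul :: "nat \<Rightarrow> cmat \<Rightarrow> cmat \<Rightarrow> cmat" where
  "mmul n A B = (\<lambda>(i,j). \<Sum>k<2*n. A (i,k) * B (k,j))"

definition mtrans :: "cmat \<Rightarrow> cmat" where
  "mtrans A = (\<lambda>(i,j). A (j,i))"

definition Jform :: "nat \<Rightarrow> cmat" where
  "Jform n = (\<lambda>(i,j). if (i < n \<and> j = i + n) \<or> (j < n \<and> i = j + n) then 1 else 0)"

definition so :: "nat \<Rightarrow> cmat set" where
  "so n = {X. (\<forall>i j. (2*n \<le> i \<or> 2*n \<le> j) \<longrightarrow> X (i,j) = 0) \<and>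
              mmul n (mtrans X) (Jform n) + mmul n (Jform n) X = 0}"

definition lbr :: "nat \<Rightarrow> cmat \<Rightarrow> cmat \<Rightarrow> cmat" where
  "lbr n = comm (mmul n)"

text \<open>Cartan subalgebra: diagonal matrices in so(2n), i.e. diag(t_1..t_n,-t_1..-t_n).\<close>
definition cartan :: "nat \<Rightarrow> cmat set" where
  "cartan n = {H \<in> so n. \<forall>i j. i \<noteq> j \<longrightarrow> H (i,j) = 0}"

text \<open>Simple roots alpha_1..alpha_n (standard labelling): eps_k(H) = H(k-1,k-1);
  alpha_l = eps_l - eps_(l+1) for l \<le> n-1, alpha_n = eps_(n-1) + eps_n.\<close>
definition sroot :: "nat \<Rightarrow> nat \<Rightarrow> cmat \<Rightarrow> complex" where
  "sroot n l H = (if l < n then H (l-1,l-1) - H (l,l)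
                  else H (n-2,n-2) + H (n-1,n-1))"

definition rfun :: "nat \<Rightarrow> (nat \<Rightarrow> complex) \<Rightarrow> cmat \<Rightarrow> complex" where
  "rfun n a H = (\<Sum>l\<in>{1..n}. a l * sroot n l H)"

definition rspace :: "nat \<Rightarrow> (nat \<Rightarrow> complex) \<Rightarrow> cmat set" where
  "rspace n a = {X \<in> so n. \<forall>H \<in> cartan n. lbr n H X = csmul (rfun n a H) X}"

definition is_root :: "nat \<Rightarrow> (nat \<Rightarrow> complex) \<Rightarrow> bool" where
  "is_root n a \<longleftrightarrow> (\<forall>l. l \<notin> {1..n} \<longrightarrow> a l = 0) \<and> a \<noteq> (\<lambda>_. 0) \<and> rspace n a \<noteq> {0}"

definition ht :: "nat set \<Rightarrow> (nat \<Rightarrow> complex) \<Rightarrow> complex" where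
  "ht \<Sigma> a = (\<Sum>l\<in>\<Sigma>. a l)"

definition ngr :: "nat \<Rightarrow> nat set \<Rightarrow> int \<Rightarrow> cmat set" where
  "ngr n \<Sigma> m = cspan (\<Union> {rspace n a | a. is_root n a \<and> ht \<Sigma> a = of_int m})"

definition nneg :: "nat \<Rightarrow> nat set \<Rightarrow> cmat set" where
  "nneg n \<Sigma> = cspan (ngr n \<Sigma> (-1) \<union> ngr n \<Sigma> (-2) \<union> ngr n \<Sigma> (-3))"

text \<open>Realised as the Lie subalgebra generated by the letters x_0..x_(r-1) inside the
  free associative algebra on r letters truncated in degree \<ge> 4 (elements: functions on words).\<close>
type_synonym tens = "nat list \<Rightarrow> complex"

definition tmul :: "tens \<Rightarrow> tens \<Rightarrow> tens" where
  "tmul u v = (\<lambda>w. if length w \<le> 3 then (\<Sum>k\<le>length w. u (take k w) * v (drop k w)) else 0)"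

definition letter :: "nat \<Rightarrow> tens" where
  "letter i = (\<lambda>w. if w = [i] then 1 else 0)"

definition f1 :: "nat \<Rightarrow> tens set" where
  "f1 r = cspan {letter i | i. i < r}"

definition f2 :: "nat \<Rightarrow> tens set" where
  "f2 r = cspan {comm tmul x y | x y. x \<in> f1 r \<and> y \<in> f1 r}"

definition f3 :: "nat \<Rightarrow> tens set" where
  "f3 r = cspan {comm tmul x y | x y. x \<in> f1 r \<and> y \<in> f2 r}"

definition freeN3 :: "nat \<Rightarrow> tens set" where
  "freeN3 r = cspan (f1 r \<union> f2 r \<union> f3 r)"

definition graded_iso :: "nat \<Rightarrow> nat \<Rightarrow> nat set \<Rightarrow> (tens \<Rightarrow> cmat) \<Rightarrow> bool" where
  "graded_iso r n \<Sigma> \<phi> \<longleftrightarrow>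
     bij_betw \<phi> (freeN3 r) (nneg n \<Sigma>) \<and>
     (\<forall>x \<in> freeN3 r. \<forall>y \<in> freeN3 r. \<forall>a b.
        \<phi> (csmul a x + csmul b y) = csmul a (\<phi> x) + csmul b (\<phi> y)) \<and>
     (\<forall>x \<in> freeN3 r. \<forall>y \<in> freeN3 r. \<phi> (comm tmul x y) = lbr n (\<phi> x) (\<phi> y)) \<and>
     \<phi> ` f1 r = ngr n \<Sigma> (-1) \<and> \<phi> ` f2 r = ngr n \<Sigma> (-2) \<and> \<phi> ` f3 r = ngr n \<Sigma> (-3)"

end

theory Submission imports Defs begin

lemma module_csmul: "module (csmul :: complex \<Rightarrow> ('i \<Rightarrow> complex) \<Rightarrow> _)"
  by unfold_locales (auto simp: csmul_def algebra_simps fun_eq_iff)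

lemma cspan_base: "x \<in> S \<Longrightarrow> x \<in> cspan S"
  unfolding cspan_def by (rule module.span_base[OF module_csmul])

lemma cspan_zero: "0 \<in> cspan S"
  unfolding cspan_def by (rule module.span_zero[OF module_csmul])

lemma cspan_induct:
  assumes "x \<in> cspan S" "h 0" "\<And>c x y. x \<in> S \<Longrightarrow> h y \<Longrightarrow> h (csmul c x + y)"
  shows "h x"
  using module.span_induct_alt[OF module_csmul, of x S h] assms unfolding cspan_def by blast

lemma f1_shape: "x \<in> f1 r \<Longrightarrow> length w \<noteq> 1 \<Longrightarrow> x w = 0"
  unfolding f1_def
  by (erule cspan_induct) (auto simp: csmul_def letter_def split: if_splits)

lemma comm_f1_at:
  assumes "x \<in> f1 r" "y \<in> f1 r"
  shows "comm tmul x y [i,j] = x [i] * y [j] - y [i] * x [j]"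
proof -
  have x0: "x [] = 0" "x [i,j] = 0" "y [] = 0" "y [i,j] = 0"
    using f1_shape[OF assms(1)] f1_shape[OF assms(2)] by auto
  show ?thesis
    unfolding comm_def tmul_def
    by (simp add: atMost_Suc numeral_2_eq_2 x0)
qed

lemma comm_f1_zero:
  assumes "x \<in> f1 r" "y \<in> f1 r" "comm tmul x y = 0" "x \<noteq> 0"
  shows "\<exists>c. y = csmul c x"
proof -
  obtain w where w: "x w \<noteq> 0" using assms(4) by (auto simp: fun_eq_iff)
  then have "length w = 1" using f1_shape[OF assms(1)] by blast
  then obtain i where wi: "w = [i]" by (cases w) auto
  define c where "c = y [i] / x [i]"
  have "y v = c * x v" for v
  proof (cases "length v = 1")
    case True
    then obtain j where vj: "v = [j]" by (cases v) auto
    have "comm tmul x y [i,j] = 0" using assms(3) by simp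
    then have "x [i] * y [j] = y [i] * x [j]" using comm_f1_at[OF assms(1,2)] by simp
    then show ?thesis using w wi vj unfolding c_def by (simp add: field_simps)
  next
    case False
    then show ?thesis using f1_shape[OF assms(1)] f1_shape[OF assms(2)] by simp
  qed
  then show ?thesis by (auto simp: csmul_def fun_eq_iff)
qed


definition Ev :: "nat \<Rightarrow> nat \<Rightarrow> nat \<Rightarrow> cmat" where
  "Ev n q p = (\<lambda>(a,b). (if a = q \<and> b = p then 1 else 0) - (if a = p + n \<and> b = q + n then 1 else 0))"

lemma mmul_J_right:
  "mmul n A (Jform n) (a,b) = (if b < n then A (a, b+n) else if b < 2*n then A (a, b-n) else 0)"
proof -
  have "mmul n A (Jform n) (a,b) = (\<Sum>k<2*n. if k = (if b < n then b + n else b - n) \<and> b < 2*n then A (a,k) else 0)"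
    unfolding mmul_def Jform_def by (simp only: prod.case, intro sum.cong) auto
  also have "\<dots> = (if b < n then A (a, b+n) else if b < 2*n then A (a, b-n) else 0)"
    by (auto simp: sum.delta if_distrib cong: if_cong)
  finally show ?thesis .
qed

lemma mmul_J_left:
  "mmul n (Jform n) A (a,b) = (if a < n then A (a+n, b) else if a < 2*n then A (a-n, b) else 0)"
proof -
  have "mmul n (Jform n) A (a,b) = (\<Sum>k<2*n. if k = (if a < n then a + n else a - n) \<and> a < 2*n then A (k,b) else 0)"
    unfolding mmul_def Jform_def by (simp only: prod.case, intro sum.cong) auto
  also have "\<dots> = (if a < n then A (a+n, b) else if a < 2*n then A (a-n, b) else 0)"
    by (auto simp: sum.delta if_distrib cong: if_cong)
  finally show ?thesis .
qed

lemma Ev_so: assumes "p < n" "q < n" shows "Ev n q p \<in> so n"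
proof -
  have "(mmul n (mtrans (Ev n q p)) (Jform n) + mmul n (Jform n) (Ev n q p)) (a,b) = 0" for a b
    using assms
    by (simp add: mmul_J_right mmul_J_left mtrans_def Ev_def) auto
  then show ?thesis unfolding so_def using assms by (auto simp: Ev_def fun_eq_iff)
qed

lemma cartan_neg: assumes "H \<in> cartan n" "p < n" shows "H (p+n,p+n) = - H (p,p)"
proof -
  have "(mmul n (mtrans H) (Jform n) + mmul n (Jform n) H) (p,p+n) = 0"
    using assms(1) by (simp add: cartan_def so_def)
  then show ?thesis using assms(2) by (simp add: mmul_J_right mmul_J_left mtrans_def add_eq_0_iff)
qed

lemma mmul_diag_left:
  assumes "\<forall>i j. i \<noteq> j \<longrightarrow> H (i,j) = 0" "\<forall>i j. (2*n \<le> i \<or> 2*n \<le> j) \<longrightarrow> X (i,j) = 0"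
  shows "mmul n H X (a,b) = H (a,a) * X (a,b)"
proof -
  have "mmul n H X (a,b) = (\<Sum>k<2*n. if k = a then H (a,a) * X (a,b) else 0)"
    unfolding mmul_def using assms(1) by (simp only: prod.case, intro sum.cong) auto
  then show ?thesis using assms(2) by (auto simp: sum.delta)
qed

lemma mmul_diag_right:
  assumes "\<forall>i j. i \<noteq> j \<longrightarrow> H (i,j) = 0" "\<forall>i j. (2*n \<le> i \<or> 2*n \<le> j) \<longrightarrow> X (i,j) = 0"
  shows "mmul n X H (a,b) = X (a,b) * H (b,b)"
proof -
  have "mmul n X H (a,b) = (\<Sum>k<2*n. if k = b then X (a,b) * H (b,b) else 0)"
    unfolding mmul_def using assms(1) by (simp only: prod.case, intro sum.cong) auto
  then show ?thesis using assms(2) by (auto simp: sum.delta)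
qed

lemma lbr_cartan:
  assumes "H \<in> cartan n" "X \<in> so n"
  shows "lbr n H X (a,b) = (H (a,a) - H (b,b)) * X (a,b)"
proof -
  have d: "\<forall>i j. i \<noteq> j \<longrightarrow> H (i,j) = 0" using assms(1) by (simp add: cartan_def)
  have z: "\<forall>i j. (2*n \<le> i \<or> 2*n \<le> j) \<longrightarrow> X (i,j) = 0" using assms(2) by (simp add: so_def)
  show ?thesis unfolding lbr_def comm_def
    using mmul_diag_left[OF d z] mmul_diag_right[OF d z] by (simp add: algebra_simps)
qed

lemma Ev_rspace:
  assumes "p < n" "q < n" "\<And>H. H \<in> cartan n \<Longrightarrow> rfun n a H = H (q,q) - H (p,p)"
  shows "Ev n q p \<in> rspace n a"
  unfolding rspace_def
proof (intro CollectI conjI ballI Ev_so assms(1,2))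
  fix H assume H: "H \<in> cartan n"
  show "lbr n H (Ev n q p) = csmul (rfun n a H) (Ev n q p)"
  proof (rule ext, clarify)
    fix i j
    show "lbr n H (Ev n q p) (i,j) = csmul (rfun n a H) (Ev n q p) (i,j)"
      using lbr_cartan[OF H Ev_so[OF assms(1,2)], of i j] assms(3)[OF H]
        cartan_neg[OF H assms(1)] cartan_neg[OF H assms(2)]
      by (auto simp: Ev_def csmul_def)
  qed
qed

lemma Ev_commute:
  assumes "0 < n" "n \<noteq> 1"
  shows "lbr n (Ev n (p+1) p) (Ev n (p+2) p) = 0"
proof -
  have "mmul n (Ev n (p+1) p) (Ev n (p+2) p) = 0" "mmul n (Ev n (p+2) p) (Ev n (p+1) p) = 0"
    using assms by (auto simp: mmul_def Ev_def fun_eq_iff intro!: sum.neutral)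
  then show ?thesis by (simp add: lbr_def comm_def)
qed


lemma in_ngr: "X \<in> rspace n a \<Longrightarrow> is_root n a \<Longrightarrow> ht \<Sigma> a = of_int m \<Longrightarrow> X \<in> ngr n \<Sigma> m"
  unfolding ngr_def by (rule cspan_base) blast

definition a1 :: "nat \<Rightarrow> nat \<Rightarrow> complex" where "a1 i = (\<lambda>l. if l = i then -1 else 0)"
definition a2 :: "nat \<Rightarrow> nat \<Rightarrow> complex" where "a2 i = (\<lambda>l. if l = i \<or> l = i + 1 then -1 else 0)"

lemma rfun_a1: assumes "p + 3 \<le> n" shows "rfun n (a1 (p+1)) H = H (p+1,p+1) - H (p,p)"
proof -
  have "rfun n (a1 (p+1)) H = (\<Sum>l\<in>{1..n}. if l = p+1 then - sroot n (p+1) H else 0)"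
    unfolding rfun_def a1_def by (intro sum.cong) auto
  also have "\<dots> = - sroot n (p+1) H" using assms by (simp add: sum.delta)
  finally show ?thesis using assms by (simp add: sroot_def)
qed

lemma rfun_a2: assumes "p + 3 \<le> n" shows "rfun n (a2 (p+1)) H = H (p+2,p+2) - H (p,p)"
proof -
  have "rfun n (a2 (p+1)) H = (\<Sum>l\<in>{1..n}. (if l = p+1 then - sroot n (p+1) H else 0) + (if l = p+2 then - sroot n (p+2) H else 0))"
    unfolding rfun_def a2_def by (intro sum.cong) auto
  also have "\<dots> = - sroot n (p+1) H - sroot n (p+2) H" using assms by (simp add: sum.distrib sum.delta)
  finally show ?thesis using assms by (simp add: sroot_def numeral_3_eq_3)
qed

lemma Ev_nz: "p < n \<Longrightarrow> q < n \<Longrightarrow> Ev n q p \<noteq> 0"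
  by (auto simp: Ev_def fun_eq_iff)

lemma X_ngr:
  assumes "p + 3 \<le> n" "ht \<Sigma> (a1 (p+1)) = -1"
  shows "Ev n (p+1) p \<in> ngr n \<Sigma> (-1)"
proof -
  have r: "Ev n (p+1) p \<in> rspace n (a1 (p+1))"
    using assms(1) by (intro Ev_rspace rfun_a1) auto
  have "is_root n (a1 (p+1))" unfolding is_root_def
    using r Ev_nz[of p n "p+1"] assms(1) by (auto simp: a1_def fun_eq_iff)
  then show ?thesis using in_ngr[OF r] assms(2) by simp
qed

lemma Y_ngr:
  assumes "p + 3 \<le> n" "ht \<Sigma> (a2 (p+1)) = -1"
  shows "Ev n (p+2) p \<in> ngr n \<Sigma> (-1)"
proof -
  have r: "Ev n (p+2) p \<in> rspace n (a2 (p+1))"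
    using assms(1) by (intro Ev_rspace rfun_a2) auto
  have "is_root n (a2 (p+1))" unfolding is_root_def
    using r Ev_nz[of p n "p+2"] assms(1) by (auto simp: a2_def fun_eq_iff)
  then show ?thesis using in_ngr[OF r] assms(2) by simp
qed

theorem theorem4p8:
  fixes n r :: nat and \<Sigma> :: "nat set"
  assumes "4 \<le> n"
    and "(\<exists>i. 2 \<le> i \<and> i \<le> n - 2 \<and> (\<Sigma> = {1, i} \<or> \<Sigma> = {i, n})) \<or> \<Sigma> = {1, n - 1, n}"
    and "0 < r"
  shows "\<not> (\<exists>\<phi>. graded_iso r n \<Sigma> \<phi>)"
proof
  assume "\<exists>\<phi>. graded_iso r n \<Sigma> \<phi>"
  then obtain \<phi> where g: "graded_iso r n \<Sigma> \<phi>" by blast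
  obtain p where p: "p + 3 \<le> n" "ht \<Sigma> (a1 (p+1)) = -1" "ht \<Sigma> (a2 (p+1)) = -1"
  proof -
    from assms(2) show ?thesis
    proof (elim disjE exE conjE)
      fix i assume i: "2 \<le> i" "i \<le> n - 2" "\<Sigma> = {1, i}"
      show ?thesis
        apply (rule that[of "i - 1"])
        using i assms(1) by (auto simp: ht_def a1_def a2_def)
    next
      fix i assume i: "2 \<le> i" "i \<le> n - 2" "\<Sigma> = {i, n}"
      show ?thesis
        apply (rule that[of "i - 1"])
        using i assms(1) by (auto simp: ht_def a1_def a2_def)
    next
      assume "\<Sigma> = {1, n - 1, n}"
      then show ?thesis
        apply (intro that[of 0])
        using assms(1) by (auto simp: ht_def a1_def a2_def)
    qed
  qed
  define X where "X = Ev n (p+1) p"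
  define Y where "Y = Ev n (p+2) p"
  have X: "X \<in> ngr n \<Sigma> (-1)" unfolding X_def using X_ngr p by blast
  have Y: "Y \<in> ngr n \<Sigma> (-1)" unfolding Y_def using Y_ngr p by blast
  have XY: "lbr n X Y = 0" unfolding X_def Y_def using Ev_commute assms(1) by simp
  have bij: "bij_betw \<phi> (freeN3 r) (nneg n \<Sigma>)" and
    lin: "\<forall>x \<in> freeN3 r. \<forall>y \<in> freeN3 r. \<forall>a b.
        \<phi> (csmul a x + csmul b y) = csmul a (\<phi> x) + csmul b (\<phi> y)" and
    br: "\<forall>x \<in> freeN3 r. \<forall>y \<in> freeN3 r. \<phi> (comm tmul x y) = lbr n (\<phi> x) (\<phi> y)" and
    im1: "\<phi> ` f1 r = ngr n \<Sigma> (-1)"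
    using g unfolding graded_iso_def by auto
  obtain x where x: "x \<in> f1 r" "\<phi> x = X" using X im1 by (metis imageE)
  obtain y where y: "y \<in> f1 r" "\<phi> y = Y" using Y im1 by (metis imageE)
  have f1F: "f1 r \<subseteq> freeN3 r" unfolding freeN3_def by (auto intro: cspan_base)
  have cF: "comm tmul x y \<in> freeN3 r"
    unfolding freeN3_def f2_def using x y by (blast intro: cspan_base)
  have zF: "(0::tens) \<in> freeN3 r" unfolding freeN3_def by (rule cspan_zero)
  have phi0: "\<phi> 0 = 0"
    using lin zF by (metis (no_types) add.right_neutral csmul_def mult_zero_left fun_eq_iff zero_fun_def)
  have "\<phi> (comm tmul x y) = lbr n (\<phi> x) (\<phi> y)" using br x y f1F by blast
  then have "\<phi> (comm tmul x y) = \<phi> 0" using x y XY phi0 by simp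
  then have c0: "comm tmul x y = 0"
    using bij cF zF unfolding bij_betw_def inj_on_def by blast
  have "x \<noteq> 0" using x phi0 Ev_nz[of p n "p+1"] p unfolding X_def by auto
  then obtain c where "y = csmul c x" using comm_f1_zero[OF x(1) y(1) c0] by blast
  then have "\<phi> y = csmul c (\<phi> x)"
    using lin x f1F by (metis (no_types, lifting) add.right_neutral csmul_def mult_zero_left subsetD fun_eq_iff zero_fun_def) 
  then have "Y = csmul c X" using x y by simp
  then have "Y (p+2,p) = c * X (p+2,p)" by (simp add: csmul_def)
  then show False unfolding X_def Y_def Ev_def by simp
qed

end
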